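(* Fix $\alpha>2$, $\beta>0$, $d>0$ and an integer $D\ge0$, and let $c_1:=\frac{2\pi^2}{\alpha}\csc\!\left(\frac{2\pi}{\alpha}\right)$. For $\lambda>0$ and positive integers $N$ define $$q_\lambda(N):=1-\exp\!\Big(-c_1\lambda\big(\tfrac{d}{N}\big)^2\beta^{2/\alpha}\Big),\qquad g_\lambda(N):=\frac{\Big(1-q_\lambda(N)^{\lfloor D/N\rfloor+1}\Big)^N}{D+N}.$$ Then there exists $\lambda_0>0$ such that for every $\lambda\in(0,\lambda_0)$, $N=1$ is the unique maximizer of $g_\lambda(N)$ over all positive integers $N$.
   Context: $g_\lambda(N)$ is (up to the constant factor $\lambda R$) the lower bound on the transmission capacity of an $N$-hop ad hoc network with equidistant hops of length $d/N$, ALOHA access probability $p=1$, active transmitter density $\lambda$, SIR threshold $\beta$, path-loss exponent $\alpha$, end-to-end retransmission budget $D$ split as $\lfloor D/N\rfloor$ per hop, and the end-to-end delay bounded by $D+N$; $q_\lambda(N)$ is the per-hop single-slot outage probability. *)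

theory Defs
  imports "HOL-Analysis.Analysis"
begin

definition c1 :: "real \<Rightarrow> real" where
  "c1 \<alpha> = (2 * pi^2 / \<alpha>) * (1 / sin (2 * pi / \<alpha>))"

definition q_out :: "real \<Rightarrow> real \<Rightarrow> real \<Rightarrow> real \<Rightarrow> nat \<Rightarrow> real" where
  "q_out \<alpha> \<beta> d lam N =
     1 - exp (- (c1 \<alpha> * lam * (d / real N)^2 * \<beta> powr (2 / \<alpha>)))"

definition g_tc :: "real \<Rightarrow> real \<Rightarrow> real \<Rightarrow> nat \<Rightarrow> real \<Rightarrow> nat \<Rightarrow> real" where
  "g_tc \<alpha> \<beta> d D lam N =
     (1 - q_out \<alpha> \<beta> d lam N ^ (D div N + 1)) ^ N / real (D + N)"

end

theory Submission
  imports Defs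
begin

lemma q_bounds:
  fixes x :: real
  assumes "x \<ge> 0"
  shows "0 \<le> 1 - exp (- x)" "1 - exp (- x) < 1" "1 - exp (- x) \<le> x"
proof -
  have "exp (- x) \<le> exp 0" using assms by simp
  then show "0 \<le> 1 - exp (- x)" by simp
  show "1 - exp (- x) < 1" by simp
  have "1 + (- x) \<le> exp (- x)" by (rule exp_ge_add_one_self)
  then show "1 - exp (- x) \<le> x" by simp
qed

theorem proposition7:
  fixes \<alpha> \<beta> d :: real and D :: nat
  assumes "\<alpha> > 2" and "\<beta> > 0" and "d > 0"
  shows "\<exists>lam0>0. \<forall>lam. 0 < lam \<and> lam < lam0 \<longrightarrow>
           (\<forall>N::nat. N \<ge> 1 \<and> N \<noteq> 1 \<longrightarrow> g_tc \<alpha> \<beta> d D lam N < g_tc \<alpha> \<beta> d D lam 1)"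
proof -
  have a0: "\<alpha> > 0" using assms by simp
  have s1: "2 * pi / \<alpha> < pi" using assms(1) by (simp add: divide_less_eq)
  have s0: "0 < 2 * pi / \<alpha>" using a0 by simp
  have sinpos: "sin (2 * pi / \<alpha>) > 0" using sin_gt_zero[OF s0 s1] .
  have c1pos: "c1 \<alpha> > 0" unfolding c1_def using sinpos a0 by simp
  define c where "c = c1 \<alpha> * d^2 * \<beta> powr (2 / \<alpha>)"
  have cpos: "c > 0" unfolding c_def using c1pos assms by simp
  have qeq: "q_out \<alpha> \<beta> d lam N = 1 - exp (- (c * lam / (real N)^2))" for lam N
    unfolding q_out_def c_def by (simp add: power_divide field_simps)
  show ?thesis
  proof (intro exI[of _ "1 / (c * (real D + 2))"] conjI allI impI)
    show "0 < 1 / (c * (real D + 2))" using cpos by simp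
    fix lam :: real and N :: nat
    assume lam: "0 < lam \<and> lam < 1 / (c * (real D + 2))" and N: "1 \<le> N \<and> N \<noteq> 1"
    have x0: "c * lam / (real n)^2 \<ge> 0" for n using cpos lam by simp
    define q1 where "q1 = q_out \<alpha> \<beta> d lam 1"
    have q1b: "0 \<le> q1" "q1 < 1" "q1 \<le> c * lam"
      using q_bounds[OF x0[of 1]] unfolding q1_def qeq by auto
    have "c * lam < 1 / (real D + 2)"
    proof -
      have p: "c * (real D + 2) > 0" using cpos by simp
      have "lam * (c * (real D + 2)) < 1" using lam p by (simp add: pos_less_divide_eq)
      thus ?thesis by (simp add: pos_less_divide_eq mult_ac)
    qed
    have "q1 ^ (D + 1) \<le> q1" proof -
      have "q1 ^ D \<le> 1" using q1b by (simp add: power_le_one)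
      hence "q1 * q1 ^ D \<le> q1 * 1" using q1b by (intro mult_left_mono) auto
      thus ?thesis by simp
    qed
    hence qp: "q1 ^ (D + 1) < 1 / (real D + 2)" using q1b \<open>c * lam < 1 / (real D + 2)\<close> by linarith
    have g1: "g_tc \<alpha> \<beta> d D lam 1 = (1 - q1 ^ (D + 1)) / (real D + 1)"
      unfolding g_tc_def q1_def by simp
    have "1 / (real D + 2) < (1 - q1 ^ (D + 1)) / (real D + 1)"
      using qp by (simp add: field_simps)
    hence g1b: "1 / (real D + 2) < g_tc \<alpha> \<beta> d D lam 1" using g1 by simp
    define qN where "qN = q_out \<alpha> \<beta> d lam N"
    have qNb: "0 \<le> qN" "qN < 1"
      using q_bounds[OF x0[of N]] unfolding qN_def qeq by auto
    define k where "k = D div N + 1"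
    have "qN ^ k \<le> 1" using qNb by (simp add: power_le_one)
    moreover have "0 \<le> qN ^ k" using qNb by simp
    ultimately have "(1 - qN ^ k) ^ N \<le> 1"
      by (intro power_le_one) auto
    moreover have "real (D + N) \<ge> real D + 2" using N by simp
    ultimately have "(1 - qN ^ k) ^ N / real (D + N) \<le> 1 / (real D + 2)"
      by (intro frac_le) auto
    hence "g_tc \<alpha> \<beta> d D lam N \<le> 1 / (real D + 2)"
      unfolding g_tc_def qN_def k_def by simp
    with g1b show "g_tc \<alpha> \<beta> d D lam N < g_tc \<alpha> \<beta> d D lam 1" by linarith
  qed
qed

end
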